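(* Let $\mathbb{H}$ be a reproducing kernel Hilbert space with inner product $\langle\cdot,\cdot\rangle$ and feature map $\phi$, and let $(X,A,Y)$ be jointly distributed real-valued $A,Y$ with finite second moments such that $\mathbb{E}[Y\mid X]=\langle y,\phi(X)\rangle$ and $\mathbb{E}[A\mid X]=\langle a,\phi(X)\rangle$ for some $y,a\in\mathbb{H}$, with $\operatorname{Var}\mathbb{E}[A\mid X]>0$. Then for every (possibly randomized) representation $Z=g(X)$ with $\operatorname{Var}\mathbb{E}[A\mid Z]=0$, $$\operatorname{Var}\mathbb{E}[Y\mid Z]\le\operatorname{Var}\mathbb{E}[Y\mid X]-\frac{\operatorname{Cov}^2(\mathbb{E}[Y\mid X],\mathbb{E}[A\mid X])}{\operatorname{Var}\mathbb{E}[A\mid X]}.$$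
   Context: A (possibly randomized) representation is $Z=g(X,S)$ for a measurable $g$ and auxiliary randomness $S$ independent of $(X,A,Y)$. $\phi(X)$ is assumed to have finite second moment in $\mathbb{H}$. *)

theory Defs
  imports "HOL-Probability.Probability"
begin

definition cond_exp_given :: "'a measure \<Rightarrow> ('a \<Rightarrow> 'b) \<Rightarrow> 'b measure \<Rightarrow> ('a \<Rightarrow> real) \<Rightarrow> ('a \<Rightarrow> real)" where
  "cond_exp_given M X MX f = real_cond_exp M (vimage_algebra (space M) X MX) f"

definition covariance :: "'a measure \<Rightarrow> ('a \<Rightarrow> real) \<Rightarrow> ('a \<Rightarrow> real) \<Rightarrow> real" where
  "covariance M f g = (\<integral>\<omega>. (f \<omega> - (\<integral>x. f x \<partial>M)) * (g \<omega> - (\<integral>x. g x \<partial>M)) \<partial>M)"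

end

theory Submission
  imports Defs
begin


lemma (in prob_space) vimage_subalg:
  assumes "f \<in> M \<rightarrow>\<^sub>M N"
  shows "sigma_finite_subalgebra M (vimage_algebra (space M) f N)"
proof -
  have "subalgebra M (vimage_algebra (space M) f N)"
    unfolding subalgebra_def using assms
    by (auto simp: sets_vimage_algebra2 measurable_def)
  then interpret finite_measure_subalgebra M "vimage_algebra (space M) f N"
    by unfold_locales
  show ?thesis ..
qed

lemma (in prob_space) indicator_int_le1:
  assumes "prob_space N"
  shows "\<bar>\<integral>s. indicator C (x, s) \<partial>N\<bar> \<le> (1::real)"
proof -
  interpret N: prob_space N by fact
  have "(\<lambda>s. indicator C (x, s) :: real) = indicator (Pair x -` C)"
    by (auto simp: indicator_def)
  then show ?thesis using N.prob_le_1 by simp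
qed



lemma (in prob_space) key:
  fixes X :: "'a \<Rightarrow> 'x" and S :: "'a \<Rightarrow> 's" and T :: "'a \<Rightarrow> real"
  assumes Xm[measurable]: "X \<in> M \<rightarrow>\<^sub>M MX" and Sm[measurable]: "S \<in> M \<rightarrow>\<^sub>M Ms"
    and Tm[measurable]: "T \<in> borel_measurable M"
    and Ti: "integrable M T" and Fm[measurable]: "F \<in> borel_measurable MX"
    and AEF: "AE \<omega> in M. real_cond_exp M (vimage_algebra (space M) X MX) T \<omega> = F (X \<omega>)"
    and ind: "\<And>A B. A \<in> sets (MX \<Otimes>\<^sub>M borel) \<Longrightarrow> B \<in> sets Ms \<Longrightarrow>
       prob ((\<lambda>\<omega>. (X \<omega>, T \<omega>)) -` A \<inter> space M \<inter> (S -` B \<inter> space M))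
       = prob ((\<lambda>\<omega>. (X \<omega>, T \<omega>)) -` A \<inter> space M) * prob (S -` B \<inter> space M)"
    and C[measurable]: "C \<in> sets (MX \<Otimes>\<^sub>M Ms)"
  shows "(\<integral>\<omega>. indicator C (X \<omega>, S \<omega>) * T \<omega> \<partial>M) = (\<integral>\<omega>. indicator C (X \<omega>, S \<omega>) * F (X \<omega>) \<partial>M)"
proof -
  define MV where "MV = MX \<Otimes>\<^sub>M (borel :: real measure)"
  define V where "V = (\<lambda>\<omega>. (X \<omega>, T \<omega>))"
  have Vm[measurable]: "V \<in> M \<rightarrow>\<^sub>M MV" unfolding V_def MV_def by measurable
  define PV where "PV = distr M MV V"
  define PS where "PS = distr M Ms S"
  interpret PV: prob_space PV unfolding PV_def by (rule prob_space_distr) simp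
  interpret PS: prob_space PS unfolding PS_def by (rule prob_space_distr) simp
  interpret P: pair_prob_space PV PS ..
  have deq: "PV \<Otimes>\<^sub>M PS = distr M (MV \<Otimes>\<^sub>M Ms) (\<lambda>\<omega>. (V \<omega>, S \<omega>))"
  proof (rule pair_measure_eqI)
    show "sigma_finite_measure PV" "sigma_finite_measure PS"
      by unfold_locales
    show "sets (PV \<Otimes>\<^sub>M PS) = sets (distr M (MV \<Otimes>\<^sub>M Ms) (\<lambda>\<omega>. (V \<omega>, S \<omega>)))"
      unfolding PV_def PS_def by (simp cong: sets_pair_measure_cong)
    fix A B assume A: "A \<in> sets PV" and B: "B \<in> sets PS"
    then have A': "A \<in> sets MV" and B': "B \<in> sets Ms" unfolding PV_def PS_def by simp_all
    have e: "(\<lambda>\<omega>. (V \<omega>, S \<omega>)) -` (A \<times> B) \<inter> space M = V -` A \<inter> space M \<inter> (S -` B \<inter> space M)"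
      by auto
    have "emeasure (distr M (MV \<Otimes>\<^sub>M Ms) (\<lambda>\<omega>. (V \<omega>, S \<omega>))) (A \<times> B)
        = emeasure M (V -` A \<inter> space M \<inter> (S -` B \<inter> space M))"
      using A' B' by (subst emeasure_distr) (auto simp: e)
    also have "\<dots> = ennreal (prob (V -` A \<inter> space M) * prob (S -` B \<inter> space M))"
      using ind[of A B] A' B' unfolding V_def MV_def by (simp add: emeasure_eq_measure)
    also have "\<dots> = emeasure PV A * emeasure PS B"
      using A' B' unfolding PV_def PS_def
      by (simp add: emeasure_distr emeasure_eq_measure ennreal_mult)
    finally show "emeasure PV A * emeasure PS B = emeasure (distr M (MV \<Otimes>\<^sub>M Ms) (\<lambda>\<omega>. (V \<omega>, S \<omega>))) (A \<times> B)" by simp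
  qed
  have sPV[simp]: "sets PV = sets MV" unfolding PV_def by simp
  have sPS[simp]: "sets PS = sets Ms" unfolding PS_def by simp
  have gen: "(\<integral>\<omega>. f (V \<omega>, S \<omega>) \<partial>M) = (\<integral>\<omega>. (\<integral>s. f (V \<omega>, s) \<partial>PS) \<partial>M)"
    if fm[measurable]: "f \<in> borel_measurable (MV \<Otimes>\<^sub>M Ms)" and fi: "integrable M (\<lambda>\<omega>. f (V \<omega>, S \<omega>))"
    for f :: "_ \<Rightarrow> real"
  proof -
    have fm': "f \<in> borel_measurable (PV \<Otimes>\<^sub>M PS)"
      using fm by (simp cong: measurable_cong_sets sets_pair_measure_cong)
    have "(\<integral>\<omega>. f (V \<omega>, S \<omega>) \<partial>M) = integral\<^sup>L (PV \<Otimes>\<^sub>M PS) f"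
      unfolding deq by (rule integral_distr[symmetric]) simp_all
    also have "\<dots> = (\<integral>v. (\<integral>s. f (v, s) \<partial>PS) \<partial>PV)"
    proof (rule P.integral_fst'[symmetric])
      show "integrable (PV \<Otimes>\<^sub>M PS) f" unfolding deq
        by (subst integrable_distr_eq) (simp_all add: fi)
    qed
    also have "\<dots> = (\<integral>\<omega>. (\<integral>s. f (V \<omega>, s) \<partial>PS) \<partial>M)"
      unfolding PV_def
    proof (rule integral_distr)
      show "V \<in> M \<rightarrow>\<^sub>M MV" by simp
      have "(\<lambda>v. \<integral>s. f (v, s) \<partial>PS) \<in> borel_measurable PV"
        using fm' by (intro PS.borel_measurable_lebesgue_integral) simp
      then show "(\<lambda>v. \<integral>s. f (v, s) \<partial>PS) \<in> borel_measurable MV"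
        by (simp cong: measurable_cong_sets)
    qed
    finally show ?thesis .
  qed
  define k :: "_ \<Rightarrow> real" where "k x = (\<integral>s. indicator C (x, s) \<partial>PS)" for x
  have kb: "\<bar>k x\<bar> \<le> 1" for x unfolding k_def by (rule indicator_int_le1) (rule PS.prob_space_axioms)
  have km[measurable]: "k \<in> borel_measurable MX"
  proof -
    have e: "case_prod (\<lambda>x s. indicator C (x,s) :: real) = indicator C" by auto
    have "(indicator C :: _ \<Rightarrow> real) \<in> borel_measurable (MX \<Otimes>\<^sub>M PS)"
      by (subst measurable_cong_sets[OF sets_pair_measure_cong[OF refl sPS] refl]) simp
    then have "(\<lambda>x. \<integral>s. (indicator C (x, s) :: real) \<partial>PS) \<in> borel_measurable MX"
    proof -
      have m2: "case_prod (\<lambda>x s. indicator C (x,s) :: real) \<in> borel_measurable (MX \<Otimes>\<^sub>M PS)"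
        using \<open>indicator C \<in> _\<close> e by simp
      show ?thesis by (rule PS.borel_measurable_lebesgue_integral[OF m2])
    qed
    then show ?thesis unfolding k_def .
  qed
  have FXi: "integrable M (\<lambda>\<omega>. F (X \<omega>))"
  proof -
    interpret G: sigma_finite_subalgebra M "vimage_algebra (space M) X MX" by (rule vimage_subalg) simp
    show ?thesis by (rule integrable_cong_AE_imp[OF G.real_cond_exp_int(1)[OF Ti] _ AEF]) simp
  qed
  have 1: "(\<integral>\<omega>. indicator C (X \<omega>, S \<omega>) * T \<omega> \<partial>M) = (\<integral>\<omega>. k (X \<omega>) * T \<omega> \<partial>M)"
  proof -
    have "(\<integral>\<omega>. indicator C (X \<omega>, S \<omega>) * T \<omega> \<partial>M) = (\<integral>\<omega>. (\<lambda>(v,s). indicator C (fst v, s) * snd v) (V \<omega>, S \<omega>) \<partial>M)"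
      unfolding V_def by simp
    also have "\<dots> = (\<integral>\<omega>. (\<integral>s. (\<lambda>(v,s). indicator C (fst v, s) * snd v) (V \<omega>, s) \<partial>PS) \<partial>M)"
    proof (rule gen)
      show "(\<lambda>(v, s). indicator C (fst v, s) * snd v) \<in> borel_measurable (MV \<Otimes>\<^sub>M Ms)"
        unfolding MV_def by measurable
      show "integrable M (\<lambda>\<omega>. (\<lambda>(v, s). indicator C (fst v, s) * snd v) (V \<omega>, S \<omega>))"
        unfolding V_def by (rule Bochner_Integration.integrable_bound[OF Ti]) (auto simp: indicator_def)
    qed
    also have "\<dots> = (\<integral>\<omega>. k (X \<omega>) * T \<omega> \<partial>M)"
      unfolding V_def k_def by simp
    finally show ?thesis .
  qed
  have 2: "(\<integral>\<omega>. indicator C (X \<omega>, S \<omega>) * F (X \<omega>) \<partial>M) = (\<integral>\<omega>. k (X \<omega>) * F (X \<omega>) \<partial>M)"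
  proof -
    have "(\<integral>\<omega>. indicator C (X \<omega>, S \<omega>) * F (X \<omega>) \<partial>M) = (\<integral>\<omega>. (\<lambda>(v,s). indicator C (fst v, s) * F (fst v)) (V \<omega>, S \<omega>) \<partial>M)"
      unfolding V_def by simp
    also have "\<dots> = (\<integral>\<omega>. (\<integral>s. (\<lambda>(v,s). indicator C (fst v, s) * F (fst v)) (V \<omega>, s) \<partial>PS) \<partial>M)"
    proof (rule gen)
      show "(\<lambda>(v, s). indicator C (fst v, s) * F (fst v)) \<in> borel_measurable (MV \<Otimes>\<^sub>M Ms)"
        unfolding MV_def by measurable
      show "integrable M (\<lambda>\<omega>. (\<lambda>(v, s). indicator C (fst v, s) * F (fst v)) (V \<omega>, S \<omega>))"
        unfolding V_def by (rule Bochner_Integration.integrable_bound[OF FXi]) (auto simp: indicator_def)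
    qed
    also have "\<dots> = (\<integral>\<omega>. k (X \<omega>) * F (X \<omega>) \<partial>M)"
      unfolding V_def k_def by simp
    finally show ?thesis .
  qed
  interpret G: sigma_finite_subalgebra M "vimage_algebra (space M) X MX" by (rule vimage_subalg) simp
  have kXm: "(\<lambda>\<omega>. k (X \<omega>)) \<in> borel_measurable (vimage_algebra (space M) X MX)"
    using measurable_vimage_algebra1[of X "space M" MX] Xm
    by (intro measurable_compose[OF _ km]) (auto simp: measurable_def)
  have "(\<integral>\<omega>. k (X \<omega>) * T \<omega> \<partial>M) = (\<integral>\<omega>. k (X \<omega>) * real_cond_exp M (vimage_algebra (space M) X MX) T \<omega> \<partial>M)"
  proof (rule G.real_cond_exp_intg(2)[symmetric, OF _ kXm Tm])
    show "integrable M (\<lambda>x. k (X x) * T x)"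
      by (rule Bochner_Integration.integrable_bound[OF Ti]) (auto simp: abs_mult intro!: mult_left_le_one_le kb)
  qed
  also have "\<dots> = (\<integral>\<omega>. k (X \<omega>) * F (X \<omega>) \<partial>M)"
    using AEF by (intro integral_cong_AE) auto
  finally show ?thesis using 1 2 by simp
qed



lemma (in prob_space) indep_component:
  assumes ind: "indep_set {S -` B \<inter> space M | B. B \<in> sets Ms} {V -` B \<inter> space M | B. B \<in> sets MV}"
    and p: "p \<in> MV \<rightarrow>\<^sub>M N" and V: "V \<in> M \<rightarrow>\<^sub>M MV"
    and B: "B \<in> sets N" and B': "B' \<in> sets Ms"
  shows "prob ((\<lambda>\<omega>. p (V \<omega>)) -` B \<inter> space M \<inter> (S -` B' \<inter> space M))
       = prob ((\<lambda>\<omega>. p (V \<omega>)) -` B \<inter> space M) * prob (S -` B' \<inter> space M)"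
proof -
  have e: "(\<lambda>\<omega>. p (V \<omega>)) -` B \<inter> space M = V -` (p -` B \<inter> space MV) \<inter> space M"
    using V by (auto simp: measurable_def)
  have s: "p -` B \<inter> space MV \<in> sets MV" using p B by (rule measurable_sets)
  have "prob ((S -` B' \<inter> space M) \<inter> (V -` (p -` B \<inter> space MV) \<inter> space M))
     = prob (S -` B' \<inter> space M) * prob (V -` (p -` B \<inter> space MV) \<inter> space M)"
    by (rule indep_setD[OF ind]) (use s B' in blast)+
  then show ?thesis unfolding e by (simp add: Int_commute mult.commute)
qed

lemma (in prob_space) condexp_same:
  fixes X :: "'a \<Rightarrow> 'x" and S :: "'a \<Rightarrow> 's" and T :: "'a \<Rightarrow> real"
  assumes Xm[measurable]: "X \<in> M \<rightarrow>\<^sub>M MX" and Sm[measurable]: "S \<in> M \<rightarrow>\<^sub>M Ms"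
    and Tm[measurable]: "T \<in> borel_measurable M"
    and Ti: "integrable M T" and Fm[measurable]: "F \<in> borel_measurable MX"
    and AEF: "AE \<omega> in M. real_cond_exp M (vimage_algebra (space M) X MX) T \<omega> = F (X \<omega>)"
    and ind: "\<And>A B. A \<in> sets (MX \<Otimes>\<^sub>M borel) \<Longrightarrow> B \<in> sets Ms \<Longrightarrow>
       prob ((\<lambda>\<omega>. (X \<omega>, T \<omega>)) -` A \<inter> space M \<inter> (S -` B \<inter> space M))
       = prob ((\<lambda>\<omega>. (X \<omega>, T \<omega>)) -` A \<inter> space M) * prob (S -` B \<inter> space M)"
    and gm[measurable]: "g \<in> (MX \<Otimes>\<^sub>M Ms) \<rightarrow>\<^sub>M MZ"
  shows "AE \<omega> in M. real_cond_exp M (vimage_algebra (space M) (\<lambda>\<omega>. g (X \<omega>, S \<omega>)) MZ) T \<omega>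
     = real_cond_exp M (vimage_algebra (space M) (\<lambda>\<omega>. g (X \<omega>, S \<omega>)) MZ) (real_cond_exp M (vimage_algebra (space M) X MX) T) \<omega>"
proof -
  define Z where "Z = (\<lambda>\<omega>. g (X \<omega>, S \<omega>))"
  have Zm: "Z \<in> M \<rightarrow>\<^sub>M MZ" unfolding Z_def by measurable
  interpret G: sigma_finite_subalgebra M "vimage_algebra (space M) Z MZ" by (rule vimage_subalg[OF Zm])
  interpret H: sigma_finite_subalgebra M "vimage_algebra (space M) X MX" by (rule vimage_subalg[OF Xm])
  let ?fT = "real_cond_exp M (vimage_algebra (space M) X MX) T"
  have fTi: "integrable M ?fT" by (rule H.real_cond_exp_int(1)[OF Ti])
  have "AE \<omega> in M. real_cond_exp M (vimage_algebra (space M) Z MZ) T \<omega>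
     = real_cond_exp M (vimage_algebra (space M) Z MZ) ?fT \<omega>"
  proof (rule G.real_cond_exp_charact)
    fix D assume "D \<in> sets (vimage_algebra (space M) Z MZ)"
    then obtain B where B: "B \<in> sets MZ" and D: "D = Z -` B \<inter> space M"
      using Zm by (auto simp: sets_vimage_algebra2 measurable_def)
    define C where "C = g -` B \<inter> space (MX \<Otimes>\<^sub>M Ms)"
    have C[measurable]: "C \<in> sets (MX \<Otimes>\<^sub>M Ms)" unfolding C_def using gm B by (rule measurable_sets)
    have ind_eq: "indicator D \<omega> = indicator C (X \<omega>, S \<omega>)" if "\<omega> \<in> space M" for \<omega>
      using that Xm Sm unfolding D C_def Z_def
      by (auto simp: indicator_def measurable_def space_pair_measure)
    have "(\<integral>\<omega>\<in>D. T \<omega> \<partial>M) = (\<integral>\<omega>. indicator C (X \<omega>, S \<omega>) * T \<omega> \<partial>M)"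
      unfolding set_lebesgue_integral_def by (rule Bochner_Integration.integral_cong) (auto simp: ind_eq)
    also have "\<dots> = (\<integral>\<omega>. indicator C (X \<omega>, S \<omega>) * F (X \<omega>) \<partial>M)"
      by (rule key[OF Xm Sm Tm Ti Fm AEF ind C])
    also have "\<dots> = (\<integral>\<omega>. indicator C (X \<omega>, S \<omega>) * ?fT \<omega> \<partial>M)"
      by (rule integral_cong_AE) (measurable, use AEF in auto)
    also have "\<dots> = (\<integral>\<omega>\<in>D. ?fT \<omega> \<partial>M)"
      unfolding set_lebesgue_integral_def by (rule Bochner_Integration.integral_cong) (auto simp: ind_eq)
    also have "\<dots> = (\<integral>\<omega>\<in>D. real_cond_exp M (vimage_algebra (space M) Z MZ) ?fT \<omega> \<partial>M)"
      by (rule G.real_cond_exp_intA[OF fTi \<open>D \<in> _\<close>])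
    finally show "(\<integral>\<omega>\<in>D. T \<omega> \<partial>M) = (\<integral>\<omega>\<in>D. real_cond_exp M (vimage_algebra (space M) Z MZ) ?fT \<omega> \<partial>M)" .
  qed (auto simp: Ti G.real_cond_exp_int(1)[OF fTi])
  then show ?thesis unfolding Z_def .
qed



lemma L2_prod:
  fixes f g :: "'a \<Rightarrow> real"
  assumes "f \<in> borel_measurable M" "g \<in> borel_measurable M"
    "integrable M (\<lambda>x. (f x)\<^sup>2)" "integrable M (\<lambda>x. (g x)\<^sup>2)"
  shows "integrable M (\<lambda>x. f x * g x)"
proof (rule Bochner_Integration.integrable_bound)
  show "integrable M (\<lambda>x. (f x)\<^sup>2 + (g x)\<^sup>2)" using assms by simp
  show "(\<lambda>x. f x * g x) \<in> borel_measurable M" using assms by simp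
  show "AE x in M. norm (f x * g x) \<le> norm ((f x)\<^sup>2 + (g x)\<^sup>2)"
  proof (rule AE_I2)
    fix x
    have "0 \<le> (\<bar>f x\<bar> - \<bar>g x\<bar>)\<^sup>2" by simp
    then have "2 * \<bar>f x\<bar> * \<bar>g x\<bar> \<le> (f x)\<^sup>2 + (g x)\<^sup>2"
      by (simp add: power2_eq_square algebra_simps)
    moreover have "\<bar>f x\<bar> * \<bar>g x\<bar> \<ge> 0" by simp
    moreover have "norm (f x * g x) = \<bar>f x\<bar> * \<bar>g x\<bar>" by (simp add: abs_mult)
    moreover have "norm ((f x)\<^sup>2 + (g x)\<^sup>2) = (f x)\<^sup>2 + (g x)\<^sup>2" by simp
    ultimately show "norm (f x * g x) \<le> norm ((f x)\<^sup>2 + (g x)\<^sup>2)"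
      by linarith
  qed
qed

lemma (in prob_space) L2_diff_const:
  fixes f :: "'a \<Rightarrow> real"
  assumes "f \<in> borel_measurable M" "integrable M (\<lambda>x. (f x)\<^sup>2)"
  shows "integrable M (\<lambda>x. (f x - c)\<^sup>2)"
proof -
  have i: "integrable M f" using square_integrable_imp_integrable[OF assms] .
  have "(\<lambda>x. (f x - c)\<^sup>2) = (\<lambda>x. (f x)\<^sup>2 - 2 * c * f x + c\<^sup>2)"
    by (auto simp: power2_eq_square algebra_simps)
  then show ?thesis using assms i by simp
qed

lemma (in prob_space) cond_exp_L2:
  fixes T :: "'a \<Rightarrow> real"
  assumes "sigma_finite_subalgebra M H" "T \<in> borel_measurable M" "integrable M (\<lambda>x. (T x)\<^sup>2)"
  shows "integrable M (\<lambda>x. (real_cond_exp M H T x)\<^sup>2)"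
proof -
  interpret H: sigma_finite_subalgebra M H by fact
  have i: "integrable M T" using square_integrable_imp_integrable[OF assms(2,3)] .
  show ?thesis
    using H.integrable_convex_cond_exp[of T UNIV 0 0 power2] i assms(3) convex_power2 by auto
qed

lemma expand3:
  fixes u v w :: "'a \<Rightarrow> real"
  assumes m: "u \<in> borel_measurable M" "v \<in> borel_measurable M" "w \<in> borel_measurable M"
    and i: "integrable M (\<lambda>x. (u x)\<^sup>2)" "integrable M (\<lambda>x. (v x)\<^sup>2)" "integrable M (\<lambda>x. (w x)\<^sup>2)"
  shows "(\<integral>x. (u x - a * v x - w x)\<^sup>2 \<partial>M) = (\<integral>x. (u x)\<^sup>2 \<partial>M) + a\<^sup>2 * (\<integral>x. (v x)\<^sup>2 \<partial>M)
     + (\<integral>x. (w x)\<^sup>2 \<partial>M) - 2 * a * (\<integral>x. u x * v x \<partial>M) - 2 * (\<integral>x. u x * w x \<partial>M)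
     + 2 * a * (\<integral>x. v x * w x \<partial>M)"
proof -
  have uv: "integrable M (\<lambda>x. u x * v x)" by (rule L2_prod) (use m i in auto)
  have uw: "integrable M (\<lambda>x. u x * w x)" by (rule L2_prod) (use m i in auto)
  have vw: "integrable M (\<lambda>x. v x * w x)" by (rule L2_prod) (use m i in auto)
  have "(\<lambda>x. (u x - a * v x - w x)\<^sup>2) = (\<lambda>x. (u x)\<^sup>2 + a\<^sup>2 * (v x)\<^sup>2 + (w x)\<^sup>2
     - 2 * a * (u x * v x) - 2 * (u x * w x) + 2 * a * (v x * w x))"
    by (auto simp: power2_eq_square algebra_simps)
  then show ?thesis using i uv uw vw by simp
qed



theorem theorem9:
  fixes M :: "'w measure"
    and MX :: "'x measure" and MS :: "'s measure" and MZ :: "'z measure"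
    and X :: "'w \<Rightarrow> 'x" and A Y :: "'w \<Rightarrow> real"
    and S :: "'w \<Rightarrow> 's" and g :: "'x \<times> 's \<Rightarrow> 'z"
    and phi :: "'x \<Rightarrow> 'h::{real_inner, complete_space}"
    and a y :: 'h
  assumes "prob_space M"
    and "X \<in> M \<rightarrow>\<^sub>M MX"
    and "A \<in> borel_measurable M" and "Y \<in> borel_measurable M"
    and "integrable M (\<lambda>\<omega>. (A \<omega>)\<^sup>2)" and "integrable M (\<lambda>\<omega>. (Y \<omega>)\<^sup>2)"
    and "phi \<in> borel_measurable MX"
    and "integrable M (\<lambda>\<omega>. (norm (phi (X \<omega>)))\<^sup>2)"
    and "AE \<omega> in M. cond_exp_given M X MX Y \<omega> = inner y (phi (X \<omega>))"
    and "AE \<omega> in M. cond_exp_given M X MX A \<omega> = inner a (phi (X \<omega>))"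
    and "prob_space.variance M (cond_exp_given M X MX A) > 0"
    and "S \<in> M \<rightarrow>\<^sub>M MS"
    and "g \<in> (MX \<Otimes>\<^sub>M MS) \<rightarrow>\<^sub>M MZ"
    and "prob_space.indep_set M {S -` B \<inter> space M | B. B \<in> sets MS}
           {(\<lambda>\<omega>. (X \<omega>, A \<omega>, Y \<omega>)) -` B \<inter> space M | B. B \<in> sets (MX \<Otimes>\<^sub>M (borel \<Otimes>\<^sub>M borel))}"
    and "prob_space.variance M (cond_exp_given M (\<lambda>\<omega>. g (X \<omega>, S \<omega>)) MZ A) = 0"
  shows "prob_space.variance M (cond_exp_given M (\<lambda>\<omega>. g (X \<omega>, S \<omega>)) MZ Y)
     \<le> prob_space.variance M (cond_exp_given M X MX Y)
        - (covariance M (cond_exp_given M X MX Y) (cond_exp_given M X MX A))\<^sup>2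
          / prob_space.variance M (cond_exp_given M X MX A)"
proof -
  interpret prob_space M by fact
  note Xm[measurable] = assms(2)
  note Am[measurable] = assms(3) and Ym[measurable] = assms(4)
  note phim[measurable] = assms(7)
  note Sm[measurable] = assms(12) and gm[measurable] = assms(13)
  define Z where "Z = (\<lambda>\<omega>. g (X \<omega>, S \<omega>))"
  have Zm[measurable]: "Z \<in> M \<rightarrow>\<^sub>M MZ" unfolding Z_def by measurable
  define HX where "HX = vimage_algebra (space M) X MX"
  define G where "G = vimage_algebra (space M) Z MZ"
  interpret HX: sigma_finite_subalgebra M HX unfolding HX_def by (rule vimage_subalg[OF Xm])
  interpret G: sigma_finite_subalgebra M G unfolding G_def by (rule vimage_subalg[OF Zm])
  define fY where "fY = real_cond_exp M HX Y"
  define fA where "fA = real_cond_exp M HX A"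
  define W where "W = real_cond_exp M G Y"
  define U where "U = real_cond_exp M G A"
  have Ai: "integrable M A" using square_integrable_imp_integrable[OF Am assms(5)] .
  have Yi: "integrable M Y" using square_integrable_imp_integrable[OF Ym assms(6)] .
  define V where "V = (\<lambda>\<omega>. (X \<omega>, A \<omega>, Y \<omega>))"
  have Vm[measurable]: "V \<in> M \<rightarrow>\<^sub>M (MX \<Otimes>\<^sub>M (borel \<Otimes>\<^sub>M borel))" unfolding V_def by measurable
  have ind: "indep_set {S -` B \<inter> space M | B. B \<in> sets MS} {V -` B \<inter> space M | B. B \<in> sets (MX \<Otimes>\<^sub>M (borel \<Otimes>\<^sub>M borel))}"
    using assms(14) unfolding V_def .
  have indY: "prob ((\<lambda>\<omega>. (X \<omega>, Y \<omega>)) -` B \<inter> space M \<inter> (S -` B' \<inter> space M))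
       = prob ((\<lambda>\<omega>. (X \<omega>, Y \<omega>)) -` B \<inter> space M) * prob (S -` B' \<inter> space M)"
    if "B \<in> sets (MX \<Otimes>\<^sub>M borel)" "B' \<in> sets MS" for B B'
  proof -
    have p: "(\<lambda>(x, a, y). (x, y)) \<in> (MX \<Otimes>\<^sub>M (borel \<Otimes>\<^sub>M borel)) \<rightarrow>\<^sub>M (MX \<Otimes>\<^sub>M (borel :: real measure))"
      by measurable
    show ?thesis using indep_component[OF ind p Vm that] unfolding V_def by simp
  qed
  have indA: "prob ((\<lambda>\<omega>. (X \<omega>, A \<omega>)) -` B \<inter> space M \<inter> (S -` B' \<inter> space M))
       = prob ((\<lambda>\<omega>. (X \<omega>, A \<omega>)) -` B \<inter> space M) * prob (S -` B' \<inter> space M)"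
    if "B \<in> sets (MX \<Otimes>\<^sub>M borel)" "B' \<in> sets MS" for B B'
  proof -
    have p: "(\<lambda>(x, a, y). (x, a)) \<in> (MX \<Otimes>\<^sub>M (borel \<Otimes>\<^sub>M borel)) \<rightarrow>\<^sub>M (MX \<Otimes>\<^sub>M (borel :: real measure))"
      by measurable
    show ?thesis using indep_component[OF ind p Vm that] unfolding V_def by simp
  qed
  have Fm1: "(\<lambda>x. inner y (phi x)) \<in> borel_measurable MX"
    by (rule borel_measurable_continuous_on[OF _ phim]) (intro continuous_intros)
  have Fm2: "(\<lambda>x. inner a (phi x)) \<in> borel_measurable MX"
    by (rule borel_measurable_continuous_on[OF _ phim]) (intro continuous_intros)
  have WY: "AE \<omega> in M. W \<omega> = real_cond_exp M G fY \<omega>"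
    using condexp_same[OF Xm Sm Ym Yi Fm1 assms(9)[unfolded cond_exp_given_def] indY gm]
    unfolding W_def G_def fY_def HX_def Z_def cond_exp_given_def .
  have UA: "AE \<omega> in M. U \<omega> = real_cond_exp M G fA \<omega>"
    using condexp_same[OF Xm Sm Am Ai Fm2 assms(10)[unfolded cond_exp_given_def] indA gm]
    unfolding U_def G_def fA_def HX_def Z_def cond_exp_given_def .
  have [measurable]: "fY \<in> borel_measurable M" "fA \<in> borel_measurable M"
    "W \<in> borel_measurable M" "U \<in> borel_measurable M"
    unfolding fY_def fA_def W_def U_def by simp_all
  have WG[measurable]: "W \<in> borel_measurable G" unfolding W_def by simp
  have fY2: "integrable M (\<lambda>x. (fY x)\<^sup>2)" unfolding fY_def
    by (rule cond_exp_L2[OF HX.sigma_finite_subalgebra_axioms Ym assms(6)])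
  have fA2: "integrable M (\<lambda>x. (fA x)\<^sup>2)" unfolding fA_def
    by (rule cond_exp_L2[OF HX.sigma_finite_subalgebra_axioms Am assms(5)])
  have W2: "integrable M (\<lambda>x. (W x)\<^sup>2)" unfolding W_def
    by (rule cond_exp_L2[OF G.sigma_finite_subalgebra_axioms Ym assms(6)])
  have U2: "integrable M (\<lambda>x. (U x)\<^sup>2)" unfolding U_def
    by (rule cond_exp_L2[OF G.sigma_finite_subalgebra_axioms Am assms(5)])
  have Wi: "integrable M W" using square_integrable_imp_integrable[OF _ W2] by simp
  have Ui: "integrable M U" using square_integrable_imp_integrable[OF _ U2] by simp
  define m where "m = expectation W"
  define mY where "mY = expectation fY"
  define mA where "mA = expectation fA"
  define c where "c = expectation U"
  define w where "w x = W x - m" for x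
  define u where "u x = fY x - mY" for x
  define v where "v x = fA x - mA" for x
  have [measurable]: "w \<in> borel_measurable M" "u \<in> borel_measurable M" "v \<in> borel_measurable M"
    unfolding w_def u_def v_def by simp_all
  have wG[measurable]: "w \<in> borel_measurable G" unfolding w_def by simp
  have w2: "integrable M (\<lambda>x. (w x)\<^sup>2)" unfolding w_def by (rule L2_diff_const) (simp_all add: W2)
  have u2: "integrable M (\<lambda>x. (u x)\<^sup>2)" unfolding u_def by (rule L2_diff_const) (simp_all add: fY2)
  have v2: "integrable M (\<lambda>x. (v x)\<^sup>2)" unfolding v_def by (rule L2_diff_const) (simp_all add: fA2)
  have wi: "integrable M w" unfolding w_def using Wi by simp
  have w0: "expectation w = 0" unfolding w_def m_def using Wi by (simp add: prob_space)
  have wfY: "integrable M (\<lambda>x. w x * fY x)" by (rule L2_prod) (simp_all add: w2 fY2)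
  have wfA: "integrable M (\<lambda>x. w x * fA x)" by (rule L2_prod) (simp_all add: w2 fA2)
  have wW: "integrable M (\<lambda>x. w x * W x)" by (rule L2_prod) (simp_all add: w2 W2)
  have "(\<integral>x. w x * fY x \<partial>M) = (\<integral>x. w x * real_cond_exp M G fY x \<partial>M)"
    by (rule G.real_cond_exp_intg(2)[symmetric]) (simp_all add: wfY)
  also have "\<dots> = (\<integral>x. w x * W x \<partial>M)"
    using WY by (intro integral_cong_AE) auto
  finally have e1: "(\<integral>x. w x * fY x \<partial>M) = (\<integral>x. w x * W x \<partial>M)" .
  have wu: "(\<integral>x. w x * u x \<partial>M) = (\<integral>x. (w x)\<^sup>2 \<partial>M)"
  proof -
    have "(\<integral>x. w x * u x \<partial>M) = (\<integral>x. w x * fY x - mY * w x \<partial>M)"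
      unfolding u_def by (simp add: algebra_simps)
    also have "\<dots> = (\<integral>x. w x * fY x \<partial>M)" using wfY wi w0 by simp
    also have "\<dots> = (\<integral>x. w x * W x - m * w x \<partial>M)" using e1 wW wi w0 by simp
    also have "\<dots> = (\<integral>x. (w x)\<^sup>2 \<partial>M)" unfolding w_def by (simp add: power2_eq_square algebra_simps)
    finally show ?thesis .
  qed
  have Uc: "AE x in M. U x = c"
  proof -
    have "(\<integral>x. (U x - c)\<^sup>2 \<partial>M) = 0"
      using assms(15) unfolding c_def U_def G_def Z_def cond_exp_given_def by simp
    then have "AE x in M. (U x - c)\<^sup>2 = 0"
      by (subst (asm) integral_nonneg_eq_0_iff_AE) (auto intro: L2_diff_const U2)
    then show ?thesis by auto
  qed
  have "(\<integral>x. w x * fA x \<partial>M) = (\<integral>x. w x * real_cond_exp M G fA x \<partial>M)"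
    by (rule G.real_cond_exp_intg(2)[symmetric]) (simp_all add: wfA)
  also have "\<dots> = (\<integral>x. w x * c \<partial>M)"
    using UA Uc by (intro integral_cong_AE) auto
  also have "\<dots> = 0" using w0 by simp
  finally have e2: "(\<integral>x. w x * fA x \<partial>M) = 0" .
  have wv: "(\<integral>x. v x * w x \<partial>M) = 0"
  proof -
    have "(\<integral>x. v x * w x \<partial>M) = (\<integral>x. w x * fA x - mA * w x \<partial>M)"
      unfolding v_def by (simp add: algebra_simps)
    also have "\<dots> = 0" using wfA wi w0 e2 by simp
    finally show ?thesis .
  qed
  have uw': "(\<integral>x. u x * w x \<partial>M) = (\<integral>x. (w x)\<^sup>2 \<partial>M)" using wu by (simp add: mult.commute)
  define Vw where "Vw = (\<integral>x. (w x)\<^sup>2 \<partial>M)"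
  define Vu where "Vu = (\<integral>x. (u x)\<^sup>2 \<partial>M)"
  define Vv where "Vv = (\<integral>x. (v x)\<^sup>2 \<partial>M)"
  define Cv where "Cv = (\<integral>x. u x * v x \<partial>M)"
  have Vvpos: "Vv > 0" using assms(11) unfolding Vv_def v_def mA_def fA_def HX_def cond_exp_given_def by simp
  define al where "al = Cv / Vv"
  have "0 \<le> (\<integral>x. (u x - al * v x - w x)\<^sup>2 \<partial>M)" by simp
  also have "\<dots> = Vu + al\<^sup>2 * Vv + Vw - 2 * al * Cv - 2 * Vw + 0"
    unfolding Vu_def Vv_def Vw_def Cv_def
    using expand3[of u M v w al] u2 v2 w2 uw' wv by simp
  also have "\<dots> = Vu - Cv\<^sup>2 / Vv - Vw"
    unfolding al_def using Vvpos by (simp add: power2_eq_square field_simps)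
  finally have fin: "Vw \<le> Vu - Cv\<^sup>2 / Vv" by simp
  have eW: "cond_exp_given M (\<lambda>\<omega>. g (X \<omega>, S \<omega>)) MZ Y = W"
    unfolding cond_exp_given_def W_def G_def Z_def ..
  have eY: "cond_exp_given M X MX Y = fY" unfolding cond_exp_given_def fY_def HX_def ..
  have eA: "cond_exp_given M X MX A = fA" unfolding cond_exp_given_def fA_def HX_def ..
  show ?thesis unfolding eW eY eA covariance_def
    using fin unfolding Vw_def Vu_def Vv_def Cv_def w_def u_def v_def m_def mY_def mA_def .
qed

end
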